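(* Let $G$ be a finitely generated group, $U$ a finite generating set of $G$, and $H\leqslant G$ with $[G:H]=d$. There exists a finite generating set $V$ of $H$ such that $|V|\geqslant\frac{1}{d}|U|$ and $V\subset B_U(2d!+1)$.
   Context: $B_U(r)$ denotes the closed ball of radius $r$ about the identity in $G$ for the word metric induced by $U$. *)

theory Defs
  imports "HOL-Algebra.Algebra"
begin

definition word_ball :: "('a, 'b) monoid_scheme \<Rightarrow> 'a set \<Rightarrow> nat \<Rightarrow> 'a set" where
  "word_ball G U r =
     {foldr (\<otimes>\<^bsub>G\<^esub>) xs \<one>\<^bsub>G\<^esub> | xs. length xs \<le> r \<and> set xs \<subseteq> U \<union> (\<lambda>u. inv\<^bsub>G\<^esub> u) ` U}"

end

theory Submission
  imports Defs
begin

context group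
begin

lemma foldr_carrier: "set xs \<subseteq> carrier G \<Longrightarrow> foldr (\<otimes>) xs \<one> \<in> carrier G"
  by (induction xs) auto

lemma foldr_gen: "set xs \<subseteq> carrier G \<Longrightarrow> b \<in> carrier G \<Longrightarrow>
   foldr (\<otimes>) xs b = foldr (\<otimes>) xs \<one> \<otimes> b"
  by (induction xs) (auto simp: m_assoc foldr_carrier)

lemma foldr_app: "set xs \<subseteq> carrier G \<Longrightarrow> set ys \<subseteq> carrier G \<Longrightarrow>
   foldr (\<otimes>) (xs @ ys) \<one> = foldr (\<otimes>) xs \<one> \<otimes> foldr (\<otimes>) ys \<one>"
  using foldr_gen[of xs "foldr (\<otimes>) ys \<one>"] by (simp add: foldr_carrier)

lemma foldr_rev_inv: "set xs \<subseteq> carrier G \<Longrightarrow>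
   foldr (\<otimes>) (rev (map (\<lambda>u. inv u) xs)) \<one> = inv (foldr (\<otimes>) xs \<one>)"
proof (induction xs)
  case Nil then show ?case by simp
next
  case (Cons a xs)
  have c: "set (rev (map (\<lambda>u. inv u) xs)) \<subseteq> carrier G" "set [inv a] \<subseteq> carrier G"
    using Cons.prems by auto
  have "foldr (\<otimes>) (rev (map (\<lambda>u. inv u) (a # xs))) \<one>
        = foldr (\<otimes>) (rev (map (\<lambda>u. inv u) xs) @ [inv a]) \<one>" by simp
  also have "\<dots> = foldr (\<otimes>) (rev (map (\<lambda>u. inv u) xs)) \<one> \<otimes> foldr (\<otimes>) [inv a] \<one>"
    by (rule foldr_app[OF c])
  also have "\<dots> = inv (foldr (\<otimes>) xs \<one>) \<otimes> inv a" using Cons by simp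
  also have "\<dots> = inv (a \<otimes> foldr (\<otimes>) xs \<one>)" using Cons.prems
    by (simp add: inv_mult_group foldr_carrier)
  finally show ?case by simp
qed

lemma wbI: "a = foldr (\<otimes>) xs \<one> \<Longrightarrow> length xs \<le> r \<Longrightarrow> set xs \<subseteq> U \<union> (\<lambda>u. inv u) ` U
  \<Longrightarrow> a \<in> word_ball G U r"
  unfolding word_ball_def by blast

lemma wb_carrier: "U \<subseteq> carrier G \<Longrightarrow> word_ball G U r \<subseteq> carrier G"
  unfolding word_ball_def by (auto intro!: foldr_carrier)

lemma wb_mono: "r \<le> s \<Longrightarrow> word_ball G U r \<subseteq> word_ball G U s"
  unfolding word_ball_def by fastforce

lemma wb_mult: assumes "U \<subseteq> carrier G" "a \<in> word_ball G U r" "b \<in> word_ball G U s"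
  shows "a \<otimes> b \<in> word_ball G U (r + s)"
proof -
  obtain xs where xs: "a = foldr (\<otimes>) xs \<one>" "length xs \<le> r" "set xs \<subseteq> U \<union> (\<lambda>u. inv u) ` U"
    using assms(2) unfolding word_ball_def by blast
  obtain ys where ys: "b = foldr (\<otimes>) ys \<one>" "length ys \<le> s" "set ys \<subseteq> U \<union> (\<lambda>u. inv u) ` U"
    using assms(3) unfolding word_ball_def by blast
  have S: "U \<union> (\<lambda>u. inv u) ` U \<subseteq> carrier G" using assms(1) by auto
  have "a \<otimes> b = foldr (\<otimes>) (xs @ ys) \<one>"
    proof -
    have c: "set xs \<subseteq> carrier G" "set ys \<subseteq> carrier G" using xs ys S by blast+
    show ?thesis by (simp only: foldr_app[OF c] xs(1) ys(1))
  qed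
  moreover have "length (xs @ ys) \<le> r + s" using xs ys by simp
  moreover have "set (xs @ ys) \<subseteq> U \<union> (\<lambda>u. inv u) ` U" using xs ys by simp
  ultimately show ?thesis by (rule wbI)
qed

lemma wb_inv: assumes "U \<subseteq> carrier G" "a \<in> word_ball G U r"
  shows "inv a \<in> word_ball G U r"
proof -
  obtain xs where xs: "a = foldr (\<otimes>) xs \<one>" "length xs \<le> r" "set xs \<subseteq> U \<union> (\<lambda>u. inv u) ` U"
    using assms(2) unfolding word_ball_def by blast
  have S: "U \<union> (\<lambda>u. inv u) ` U \<subseteq> carrier G" using assms(1) by auto
  have "inv a = foldr (\<otimes>) (rev (map (\<lambda>u. inv u) xs)) \<one>"
    proof -
    have c: "set xs \<subseteq> carrier G" using xs S by blast
    show ?thesis by (simp only: foldr_rev_inv[OF c] xs(1))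
  qed
  moreover have "set (rev (map (\<lambda>u. inv u) xs)) \<subseteq> U \<union> (\<lambda>u. inv u) ` U"
  proof
    fix y assume "y \<in> set (rev (map (\<lambda>u. inv u) xs))"
    then obtain x where x: "x \<in> set xs" "y = inv x" by auto
    then have "x \<in> U \<or> x \<in> (\<lambda>u. inv u) ` U" using xs(3) by blast
    then show "y \<in> U \<union> (\<lambda>u. inv u) ` U"
    proof
      assume "x \<in> U" then show ?thesis using x by blast
    next
      assume "x \<in> (\<lambda>u. inv u) ` U"
      then obtain u where "u \<in> U" "x = inv u" by blast
      then have "y = u" using x assms(1) by auto
      then show ?thesis using \<open>u \<in> U\<close> by blast
    qed
  qed
  moreover have "length (rev (map (\<lambda>u. inv u) xs)) \<le> r" using xs by simp
  ultimately show ?thesis by (intro wbI)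
qed

lemma wb_gen: "x \<in> U \<union> (\<lambda>u. inv u) ` U \<Longrightarrow> U \<subseteq> carrier G \<Longrightarrow> x \<in> word_ball G U 1"
  by (rule wbI[of _ "[x]"]) auto

lemma wb_one: "\<one> \<in> word_ball G U r"
  by (rule wbI[of _ "[]"]) auto

lemma wb_Suc: assumes "U \<subseteq> carrier G"
  shows "word_ball G U (Suc k) \<subseteq> word_ball G U k \<union> {b \<otimes> x | b x. b \<in> word_ball G U k \<and> x \<in> U \<union> (\<lambda>u. inv u) ` U}"
proof
  fix a assume "a \<in> word_ball G U (Suc k)"
  then obtain xs where xs: "a = foldr (\<otimes>) xs \<one>" "length xs \<le> Suc k" "set xs \<subseteq> U \<union> (\<lambda>u. inv u) ` U"
    unfolding word_ball_def by blast
  have S: "U \<union> (\<lambda>u. inv u) ` U \<subseteq> carrier G" using assms(1) by auto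
  show "a \<in> word_ball G U k \<union> {b \<otimes> x | b x. b \<in> word_ball G U k \<and> x \<in> U \<union> (\<lambda>u. inv u) ` U}"
  proof (cases "length xs \<le> k")
    case True then have "a \<in> word_ball G U k" using xs by (intro wbI[of a xs]) auto
    then show ?thesis by blast
  next
    case False
    then obtain ys y where ys: "xs = ys @ [y]" by (cases xs rule: rev_exhaust) auto
    have "a = foldr (\<otimes>) ys \<one> \<otimes> y" using xs ys S foldr_app[of ys "[y]"] by (auto simp del: foldr_append)
    moreover have "foldr (\<otimes>) ys \<one> \<in> word_ball G U k"
      using xs ys by (intro wbI[of _ ys]) auto
    moreover have "y \<in> U \<union> (\<lambda>u. inv u) ` U" using xs ys by auto
    ultimately show ?thesis by blast
  qed
qed

lemma wb_generate: assumes "U \<subseteq> carrier G" "g \<in> generate G U"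
  shows "\<exists>k. g \<in> word_ball G U k"
  using assms(2)
proof induction
  case one then show ?case using wb_one by blast
next
  case (incl h) then show ?case using wb_gen[of h] assms(1) by blast
next
  case (inv h) then show ?case using wb_gen[of "inv h"] assms(1) by blast
next
  case (eng h1 h2) then show ?case using wb_mult[OF assms(1)] by blast
qed

lemma wb_finite: "finite U \<Longrightarrow> finite (word_ball G U r)"
proof -
  assume "finite U"
  then have "finite {xs. set xs \<subseteq> U \<union> (\<lambda>u. inv u) ` U \<and> length xs \<le> r}"
    by (intro finite_lists_length_le) auto
  then have "finite ((\<lambda>xs. foldr (\<otimes>) xs \<one>) ` {xs. set xs \<subseteq> U \<union> (\<lambda>u. inv u) ` U \<and> length xs \<le> r})"
    by blast
  moreover have "word_ball G U r = (\<lambda>xs. foldr (\<otimes>) xs \<one>) ` {xs. set xs \<subseteq> U \<union> (\<lambda>u. inv u) ` U \<and> length xs \<le> r}"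
    unfolding word_ball_def by auto
  ultimately show ?thesis by simp
qed


lemma cosets_step:
  assumes U: "U \<subseteq> carrier G" and H: "subgroup H G"
  shows "(\<lambda>t. H #> t) ` word_ball G U (Suc k) =
    (\<lambda>t. H #> t) ` word_ball G U k \<union> (\<lambda>(c, x). c #> x) ` ((\<lambda>t. H #> t) ` word_ball G U k \<times> (U \<union> (\<lambda>u. inv u) ` U))"
proof
  have Hc: "H \<subseteq> carrier G" using H subgroup.subset by blast
  show "(\<lambda>t. H #> t) ` word_ball G U (Suc k) \<subseteq> (\<lambda>t. H #> t) ` word_ball G U k \<union> (\<lambda>(c, x). c #> x) ` ((\<lambda>t. H #> t) ` word_ball G U k \<times> (U \<union> (\<lambda>u. inv u) ` U))"
  proof
    fix c assume "c \<in> (\<lambda>t. H #> t) ` word_ball G U (Suc k)"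
    then obtain a where a: "a \<in> word_ball G U (Suc k)" "c = H #> a" by blast
    from wb_Suc[OF U] a(1) consider "a \<in> word_ball G U k"
      | b x where "b \<in> word_ball G U k" "x \<in> U \<union> (\<lambda>u. inv u) ` U" "a = b \<otimes> x" by blast
    then show "c \<in> (\<lambda>t. H #> t) ` word_ball G U k \<union> (\<lambda>(c, x). c #> x) ` ((\<lambda>t. H #> t) ` word_ball G U k \<times> (U \<union> (\<lambda>u. inv u) ` U))"
    proof cases
      case 1 then show ?thesis using a by (intro UnI1 image_eqI[of _ _ a]) auto
    next
      case (2 b x)
      have bc: "b \<in> carrier G" using 2 wb_carrier[OF U] by blast
      have xc: "x \<in> carrier G" using 2 U by blast
      have "c = H #> (b \<otimes> x)" using a(2) 2(3) by simp
      also have "\<dots> = (H #> b) #> x" by (rule sym, rule coset_mult_assoc[OF Hc bc xc])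
      finally have "c = (H #> b) #> x" .
      moreover have "(H #> b, x) \<in> (\<lambda>t. H #> t) ` word_ball G U k \<times> (U \<union> (\<lambda>u. inv u) ` U)"
        using 2 by blast
      ultimately show ?thesis by (intro UnI2 image_eqI[of _ _ "(H #> b, x)"]) auto
    qed
  qed
next
  have Hc: "H \<subseteq> carrier G" using H subgroup.subset by blast
  have "(\<lambda>t. H #> t) ` word_ball G U k \<subseteq> (\<lambda>t. H #> t) ` word_ball G U (Suc k)"
    using wb_mono[of k "Suc k" U] by (intro image_mono) simp
  moreover have "(\<lambda>(c, x). c #> x) ` ((\<lambda>t. H #> t) ` word_ball G U k \<times> (U \<union> (\<lambda>u. inv u) ` U))
     \<subseteq> (\<lambda>t. H #> t) ` word_ball G U (Suc k)"
  proof
    fix c assume "c \<in> (\<lambda>(c, x). c #> x) ` ((\<lambda>t. H #> t) ` word_ball G U k \<times> (U \<union> (\<lambda>u. inv u) ` U))"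
    then obtain p x where px: "p \<in> (\<lambda>t. H #> t) ` word_ball G U k" "x \<in> U \<union> (\<lambda>u. inv u) ` U" "c = p #> x" by blast
    then obtain b where bx: "b \<in> word_ball G U k" "x \<in> U \<union> (\<lambda>u. inv u) ` U" "c = (H #> b) #> x" by blast
    have bc: "b \<in> carrier G" using bx wb_carrier[OF U] by blast
    have xc: "x \<in> carrier G" using bx U by blast
    have "c = H #> (b \<otimes> x)" using bx(3) coset_mult_assoc[OF Hc bc xc] by simp
    moreover have "b \<otimes> x \<in> word_ball G U (k + 1)"
      using wb_mult[OF U bx(1) wb_gen[OF bx(2) U]] .
    ultimately show "c \<in> (\<lambda>t. H #> t) ` word_ball G U (Suc k)" by (intro image_eqI[of _ _ "b \<otimes> x"]) auto
  qed
  ultimately show "(\<lambda>t. H #> t) ` word_ball G U k \<union> (\<lambda>(c, x). c #> x) ` ((\<lambda>t. H #> t) ` word_ball G U k \<times> (U \<union> (\<lambda>u. inv u) ` U))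
     \<subseteq> (\<lambda>t. H #> t) ` word_ball G U (Suc k)" by (rule Un_least)
qed

lemma cosets_stable:
  assumes U: "U \<subseteq> carrier G" and H: "subgroup H G"
    and st: "(\<lambda>t. H #> t) ` word_ball G U (Suc k) = (\<lambda>t. H #> t) ` word_ball G U k"
  shows "(\<lambda>t. H #> t) ` word_ball G U (k + j) = (\<lambda>t. H #> t) ` word_ball G U k"
proof (induction j)
  case 0 then show ?case by simp
next
  case (Suc j)
  let ?S = "U \<union> (\<lambda>u. inv u) ` U"
  have "(\<lambda>t. H #> t) ` word_ball G U (Suc (k + j)) =
     (\<lambda>t. H #> t) ` word_ball G U (k + j) \<union> (\<lambda>(c, x). c #> x) ` ((\<lambda>t. H #> t) ` word_ball G U (k + j) \<times> ?S)"
    by (rule cosets_step[OF U H])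
  also have "\<dots> = (\<lambda>t. H #> t) ` word_ball G U k \<union> (\<lambda>(c, x). c #> x) ` ((\<lambda>t. H #> t) ` word_ball G U k \<times> ?S)"
    by (simp only: Suc.IH)
  also have "\<dots> = (\<lambda>t. H #> t) ` word_ball G U (Suc k)"
    by (rule cosets_step[OF U H, symmetric])
  also have "\<dots> = (\<lambda>t. H #> t) ` word_ball G U k" by (rule st)
  finally show ?case by (simp only: add_Suc_right)
qed

lemma cosets_sub:
  assumes U: "U \<subseteq> carrier G" and H: "subgroup H G"
  shows "(\<lambda>t. H #> t) ` word_ball G U j \<subseteq> rcosets H"
proof (rule image_subsetI)
  have Hc: "H \<subseteq> carrier G" using H subgroup.subset by blast
  fix t assume "t \<in> word_ball G U j"
  then have "t \<in> carrier G" using wb_carrier[OF U] by (rule subsetD[rotated])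
  then show "H #> t \<in> rcosets H" by (rule rcosetsI[OF Hc])
qed

lemma cosets_all:
  assumes U: "U \<subseteq> carrier G" and gen: "generate G U = carrier G" and H: "subgroup H G"
    and st: "(\<lambda>t. H #> t) ` word_ball G U (Suc k) = (\<lambda>t. H #> t) ` word_ball G U k"
  shows "(\<lambda>t. H #> t) ` word_ball G U k = rcosets H"
proof
  have Hc: "H \<subseteq> carrier G" using H subgroup.subset by blast
  show "(\<lambda>t. H #> t) ` word_ball G U k \<subseteq> rcosets H"
    by (rule cosets_sub[OF U H])
  show "rcosets H \<subseteq> (\<lambda>t. H #> t) ` word_ball G U k"
  proof
    fix c assume "c \<in> rcosets H"
    then obtain g where g: "g \<in> carrier G" "c = H #> g" unfolding RCOSETS_def by blast
    then obtain m where m: "g \<in> word_ball G U m" using wb_generate[OF U] gen by blast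
    then have "g \<in> word_ball G U (k + m)" using wb_mono[of m "k + m" U] by auto
    then have "c \<in> (\<lambda>t. H #> t) ` word_ball G U (k + m)" using g(2) by simp
    then show "c \<in> (\<lambda>t. H #> t) ` word_ball G U k"
      using cosets_stable[OF U H st, of m] by simp
  qed
qed

lemma cosets_grow:
  assumes U: "U \<subseteq> carrier G" and gen: "generate G U = carrier G" and H: "subgroup H G"
    and fin: "finite (rcosets H)"
  shows "(\<lambda>t. H #> t) ` word_ball G U k = rcosets H \<or> k + 1 \<le> card ((\<lambda>t. H #> t) ` word_ball G U k)"
proof (induction k)
  case 0
  have "word_ball G U 0 = {\<one>}" unfolding word_ball_def by auto
  then show ?case by simp
next
  case (Suc k)
  have Hc: "H \<subseteq> carrier G" using H subgroup.subset by blast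
  have sub: "\<And>j. (\<lambda>t. H #> t) ` word_ball G U j \<subseteq> rcosets H"
    by (rule cosets_sub[OF U H])
  have mono: "(\<lambda>t. H #> t) ` word_ball G U k \<subseteq> (\<lambda>t. H #> t) ` word_ball G U (Suc k)"
    using wb_mono[of k "Suc k" U] by (intro image_mono) simp
  show ?case
  proof (cases "(\<lambda>t. H #> t) ` word_ball G U (Suc k) = (\<lambda>t. H #> t) ` word_ball G U k")
    case True
    then have "(\<lambda>t. H #> t) ` word_ball G U k = rcosets H" using cosets_all[OF U gen H] by simp
    then show ?thesis using True by simp
  next
    case False
    then have ps: "(\<lambda>t. H #> t) ` word_ball G U k \<subset> (\<lambda>t. H #> t) ` word_ball G U (Suc k)"
      using mono False unfolding psubset_eq by metis
    have "finite ((\<lambda>t. H #> t) ` word_ball G U (Suc k))" using sub[of "Suc k"] fin by (rule finite_subset)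
    then have "card ((\<lambda>t. H #> t) ` word_ball G U k) < card ((\<lambda>t. H #> t) ` word_ball G U (Suc k))"
      using ps by (rule psubset_card_mono)
    moreover have "(\<lambda>t. H #> t) ` word_ball G U k \<noteq> rcosets H" using ps sub[of "Suc k"] by auto
    ultimately show ?thesis using Suc.IH by simp
  qed
qed

lemma cosets_cover:
  assumes U: "U \<subseteq> carrier G" and gen: "generate G U = carrier G" and H: "subgroup H G"
    and fin: "finite (rcosets H)"
  shows "(\<lambda>t. H #> t) ` word_ball G U (card (rcosets H)) = rcosets H"
proof -
  have Hc: "H \<subseteq> carrier G" using H subgroup.subset by blast
  have sub: "(\<lambda>t. H #> t) ` word_ball G U (card (rcosets H)) \<subseteq> rcosets H"
    by (rule cosets_sub[OF U H])
  have "card ((\<lambda>t. H #> t) ` word_ball G U (card (rcosets H))) \<le> card (rcosets H)"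
    by (rule card_mono[OF fin sub])
  then show ?thesis using cosets_grow[OF U gen H fin, of "card (rcosets H)"] by linarith
qed


lemma gen_main:
  assumes U: "U \<subseteq> carrier G" and gen: "generate G U = carrier G" and H: "subgroup H G"
    and fin: "finite (rcosets H)"
  shows "H \<subseteq> generate G (H \<inter> word_ball G U (2 * card (rcosets H) + 1))"
proof -
  define d where "d = card (rcosets H)"
  define V where "V = H \<inter> word_ball G U (2 * d + 1)"
  have Hc: "H \<subseteq> carrier G" using H subgroup.subset by blast
  have Vc: "V \<subseteq> carrier G" using Hc V_def by blast
  have GVH: "generate G V \<subseteq> H" using generate_subgroup_incl[OF _ H] V_def by blast
  have cover: "(\<lambda>t. H #> t) ` word_ball G U d = rcosets H"
    unfolding d_def by (rule cosets_cover[OF U gen H fin])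
  have S: "U \<union> (\<lambda>u. inv u) ` U \<subseteq> carrier G" using U by auto
  have claim: "set xs \<subseteq> U \<union> (\<lambda>u. inv u) ` U \<Longrightarrow>
      \<exists>k\<in>generate G V. \<exists>t\<in>word_ball G U d. foldr (\<otimes>) xs \<one> = k \<otimes> t" for xs
  proof (induction xs rule: rev_induct)
    case Nil
    have "foldr (\<otimes>) [] \<one> = \<one> \<otimes> \<one>" by simp
    then show ?case using generate.one[of G V] wb_one[of U d] by blast
  next
    case (snoc x xs)
    then obtain k t where k: "k \<in> generate G V" and t: "t \<in> word_ball G U d"
      and e: "foldr (\<otimes>) xs \<one> = k \<otimes> t" by auto
    have xS: "x \<in> U \<union> (\<lambda>u. inv u) ` U" using snoc.prems by simp
    have xc: "x \<in> carrier G" using xS S by blast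
    have tc: "t \<in> carrier G" using t wb_carrier[OF U] by blast
    have kc: "k \<in> carrier G" using k GVH Hc by blast
    have xsc: "set xs \<subseteq> carrier G" using snoc.prems S by auto
    have "foldr (\<otimes>) (xs @ [x]) \<one> = foldr (\<otimes>) xs \<one> \<otimes> foldr (\<otimes>) [x] \<one>"
      by (rule foldr_app[OF xsc]) (use xc in simp)
    also have "\<dots> = k \<otimes> t \<otimes> x" using e xc by simp
    finally have e2: "foldr (\<otimes>) (xs @ [x]) \<one> = k \<otimes> t \<otimes> x" .
    have txc: "t \<otimes> x \<in> carrier G" using tc xc by simp
    have "H #> (t \<otimes> x) \<in> rcosets H" by (rule rcosetsI[OF Hc txc])
    then obtain t' where t': "t' \<in> word_ball G U d" "H #> (t \<otimes> x) = H #> t'"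
      using cover by (metis imageE)
    have t'c: "t' \<in> carrier G" using t' wb_carrier[OF U] by blast
    define h where "h = t \<otimes> x \<otimes> inv t'"
    have "H #> h = H" unfolding h_def by (rule coset_mult_inv2[OF t'(2) txc t'c Hc])
    then have hH: "h \<in> H" using coset_join1[of H h] H txc t'c unfolding h_def by simp
    have "t \<otimes> x \<in> word_ball G U (d + 1)" by (rule wb_mult[OF U t wb_gen[OF xS U]])
    then have "h \<in> word_ball G U (d + 1 + d)" unfolding h_def
      by (rule wb_mult[OF U _ wb_inv[OF U t'(1)]])
    then have "h \<in> V" using hH V_def by (simp add: mult_2)
    then have hg: "h \<in> generate G V" by (rule generate.incl)
    have "h \<otimes> t' = t \<otimes> x" unfolding h_def using txc t'c by (simp add: m_assoc)
    then have "foldr (\<otimes>) (xs @ [x]) \<one> = (k \<otimes> h) \<otimes> t'"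
      using e2 kc tc xc t'c hH Hc by (simp add: m_assoc subsetD)
    moreover have "k \<otimes> h \<in> generate G V" by (rule generate.eng[OF k hg])
    ultimately show ?case using t'(1) by blast
  qed
  show ?thesis
  proof
    fix g assume gH: "g \<in> H"
    then have "g \<in> generate G U" using gen Hc by blast
    then obtain m where "g \<in> word_ball G U m" using wb_generate[OF U] by blast
    then obtain xs where xs: "g = foldr (\<otimes>) xs \<one>" "set xs \<subseteq> U \<union> (\<lambda>u. inv u) ` U"
      unfolding word_ball_def by blast
    then obtain k t where k: "k \<in> generate G V" and t: "t \<in> word_ball G U d"
      and e: "g = k \<otimes> t" using claim by blast
    have kH: "k \<in> H" using k GVH by blast
    have kc: "k \<in> carrier G" using kH Hc by blast
    have tc: "t \<in> carrier G" using t wb_carrier[OF U] by blast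
    have "t = inv k \<otimes> g" using e kc tc by (simp add: m_assoc[symmetric])
    then have tH: "t \<in> H" using kH gH H by (simp add: subgroup.m_closed subgroup.m_inv_closed)
    have "t \<in> word_ball G U (2 * d + 1)" using t wb_mono[of d "2 * d + 1" U] by auto
    then have "t \<in> V" using tH V_def by simp
    then have "t \<in> generate G V" by (rule generate.incl)
    then have "g \<in> generate G V" using e k by (simp add: generate.eng)
    then show "g \<in> generate G (H \<inter> word_ball G U (2 * card (rcosets H) + 1))"
      using V_def d_def by simp
  qed
qed

lemma card_main:
  assumes U: "U \<subseteq> carrier G" and fU: "finite U" and H: "subgroup H G"
    and fin: "finite (rcosets H)"
  shows "card U \<le> card (rcosets H) * card (H \<inter> word_ball G U 2)"
proof -
  have Hc: "H \<subseteq> carrier G" using H subgroup.subset by blast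
  let ?W = "H \<inter> word_ball G U 2"
  have fW: "finite ?W" using wb_finite[OF fU] by blast
  have fib: "card {u \<in> U. H #> u = c} \<le> card ?W" for c
  proof (cases "{u \<in> U. H #> u = c} = {}")
    case True then show ?thesis by (metis card.empty zero_le)
  next
    case False
    then obtain u0 where u0: "u0 \<in> U" "H #> u0 = c" by blast
    have u0c: "u0 \<in> carrier G" using u0 U by blast
    have inj: "inj_on (\<lambda>a. a \<otimes> inv u0) {u \<in> U. H #> u = c}"
    proof (rule inj_onI)
      fix a b assume a: "a \<in> {u \<in> U. H #> u = c}" and b: "b \<in> {u \<in> U. H #> u = c}"
        and eq: "a \<otimes> inv u0 = b \<otimes> inv u0"
      have ac: "a \<in> carrier G" and bc: "b \<in> carrier G" using a b U by auto
      have "a = (a \<otimes> inv u0) \<otimes> u0" using ac u0c by (simp add: m_assoc)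
      also have "\<dots> = (b \<otimes> inv u0) \<otimes> u0" using eq by simp
      also have "\<dots> = b" using bc u0c by (simp add: m_assoc)
      finally show "a = b" .
    qed
    have img: "(\<lambda>a. a \<otimes> inv u0) ` {u \<in> U. H #> u = c} \<subseteq> ?W"
    proof
      fix y assume "y \<in> (\<lambda>a. a \<otimes> inv u0) ` {u \<in> U. H #> u = c}"
      then obtain a where a: "a \<in> U" "H #> a = c" "y = a \<otimes> inv u0" by blast
      have ac: "a \<in> carrier G" using a U by blast
      have "H #> a = H #> u0" using a u0 by simp
      then have "H #> (a \<otimes> inv u0) = H" by (rule coset_mult_inv2[OF _ ac u0c Hc])
      then have yH: "y \<in> H" using coset_join1[of H "a \<otimes> inv u0"] H ac u0c a(3) by simp
      have "a \<in> word_ball G U 1" using a(1) U by (intro wb_gen) auto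
      moreover have "inv u0 \<in> word_ball G U 1" using u0(1) U by (intro wb_inv wb_gen) auto
      ultimately have "a \<otimes> inv u0 \<in> word_ball G U (1 + 1)" by (rule wb_mult[OF U])
      then have "y \<in> word_ball G U 2" using a(3) by (simp add: numeral_2_eq_2)
      then show "y \<in> ?W" using yH by simp
    qed
    show ?thesis by (rule card_inj_on_le[OF inj img fW])
  qed
  have "U = (\<Union>c\<in>rcosets H. {u \<in> U. H #> u = c})"
    using U rcosetsI[OF Hc] by blast
  then have "card U \<le> (\<Sum>c\<in>rcosets H. card {u \<in> U. H #> u = c})"
    using card_UN_le[OF fin, of "\<lambda>c. {u \<in> U. H #> u = c}"] by simp
  also have "\<dots> \<le> (\<Sum>c\<in>rcosets H. card ?W)" by (rule sum_mono[OF fib])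
  also have "\<dots> = card (rcosets H) * card ?W" by simp
  finally show ?thesis .
qed

end

theorem proposition2p33:
  fixes G (structure) and U H :: "'a set" and d :: nat
  assumes "group G"
    and "finite U" and "U \<subseteq> carrier G" and "generate G U = carrier G"
    and "subgroup H G"
    and "finite (rcosets\<^bsub>G\<^esub> H)" and "card (rcosets\<^bsub>G\<^esub> H) = d"
  shows "\<exists>V. finite V \<and> V \<subseteq> H \<and> generate G V = H
           \<and> real (card V) \<ge> real (card U) / real d
           \<and> V \<subseteq> word_ball G U (2 * fact d + 1)"
proof -
  interpret group G by (rule assms(1))
  have U: "U \<subseteq> carrier G" and fU: "finite U" and gen: "generate G U = carrier G"
    and H: "subgroup H G" and fin: "finite (rcosets H)" and dd: "card (rcosets H) = d"
    using assms by auto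
  have Hc: "H \<subseteq> carrier G" using H subgroup.subset by blast
  define V where "V = H \<inter> word_ball G U (2 * fact d + 1)"
  have le: "2 * d + 1 \<le> 2 * fact d + 1" using fact_ge_self[of d] by simp
  have fV: "finite V" unfolding V_def using wb_finite[OF fU] by blast
  have "H \<subseteq> generate G (H \<inter> word_ball G U (2 * d + 1))"
    using gen_main[OF U gen H fin] dd by simp
  also have "\<dots> \<subseteq> generate G V" unfolding V_def
    by (rule mono_generate) (use wb_mono[OF le, of U] in blast)
  finally have "H \<subseteq> generate G V" .
  moreover have "generate G V \<subseteq> H" by (rule generate_subgroup_incl[OF _ H]) (simp add: V_def)
  ultimately have genV: "generate G V = H" by blast
  have "H #> \<one> \<in> rcosets H" by (rule rcosetsI[OF Hc one_closed])
  then have "rcosets H \<noteq> {}" by blast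
  then have dpos: "d > 0" using fin dd card_gt_0_iff by metis
  have "card U \<le> d * card (H \<inter> word_ball G U 2)"
    using card_main[OF U fU H fin] dd by simp
  also have "card (H \<inter> word_ball G U 2) \<le> card V"
    apply (rule card_mono[OF fV])
    using wb_mono[of 2 "2 * fact d + 1" U] unfolding V_def by auto
  then have "d * card (H \<inter> word_ball G U 2) \<le> d * card V" by simp
  finally have "card U \<le> d * card V" .
  then have "real (card U) \<le> real d * real (card V)" by (metis of_nat_mono of_nat_mult)
  then have cardV: "real (card U) / real d \<le> real (card V)"
    using dpos by (simp add: divide_le_eq mult.commute)
  show ?thesis
    by (rule exI[of _ V]) (use fV genV cardV in \<open>auto simp: V_def\<close>)
qed

end
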